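(* Let $n$ items have positive integer sizes $w_1\le w_2\le\dots\le w_n$, with total size $W=\sum_{i=1}^n w_i$, and let there be $m$ bins, bin $j$ having positive integer capacity $C_j$, fixed cost $f_j\ge 0$ and unit cost $c_j\ge 0$, where $\sum_{j=1}^m C_j\ge W$. For each bin set $r_j=f_j/C_j+c_j$, let $a_1,\dots,a_m$ be a permutation of $\{1,\dots,m\}$ with $r_{a_1}\le r_{a_2}\le\dots\le r_{a_m}$, and let $k$ be the minimum integer such that $\sum_{j=1}^{k}C_{a_j}\ge W$. Define $$Lb_1=\sum_{j=1}^{k-1}C_{a_j}r_{a_j}+\Big(W-\sum_{j=1}^{k-1}C_{a_j}\Big)r_{a_k}.$$ Let $z_1^*$ be the optimal value of the linear program $$\min \sum_{j=1}^m (f_jy_j+c_jl_j)$$ subject to $\sum_{j=1}^m x_{ij}=1$ for all $i\in\{1,\dots,n\}$; $\sum_{i=1}^n w_ix_{ij}=l_j$ for all $j\in\{1,\dots,m\}$; $l_j\le C_jy_j$ for all $j$; $0\le x_{ij}\le 1$, $0\le y_j\le 1$, $l_j\ge 0$ for all $i,j$. Then $z_1^*\ge Lb_1$.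
   Context: This linear program is the linear relaxation of an integer program for the Bin Packing with Usage Cost problem, in which each item is assigned to exactly one bin, the load $l_j$ of bin $j$ (total size of its items) may not exceed $C_j$, and a used bin $j$ costs $f_j+c_jl_j$; $y_j$ indicates whether bin $j$ is used and $x_{ij}$ whether item $i$ is in bin $j$. *)

theory Defs
  imports Complex_Main
begin

text \<open>Items are indexed by 1..n, bins by 1..m. The LP relaxation of BPUC:
  x i j = fraction of item i in bin j, y j = usage of bin j, l j = load of bin j.\<close>

definition lp_feasible ::
  "nat \<Rightarrow> nat \<Rightarrow> (nat \<Rightarrow> nat) \<Rightarrow> (nat \<Rightarrow> nat) \<Rightarrow>
   (nat \<Rightarrow> nat \<Rightarrow> real) \<Rightarrow> (nat \<Rightarrow> real) \<Rightarrow> (nat \<Rightarrow> real) \<Rightarrow> bool" where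
  "lp_feasible n m w C x y l \<longleftrightarrow>
     (\<forall>i\<in>{1..n}. (\<Sum>j=1..m. x i j) = 1) \<and>
     (\<forall>j\<in>{1..m}. (\<Sum>i=1..n. real (w i) * x i j) = l j) \<and>
     (\<forall>j\<in>{1..m}. l j \<le> real (C j) * y j) \<and>
     (\<forall>i\<in>{1..n}. \<forall>j\<in>{1..m}. 0 \<le> x i j \<and> x i j \<le> 1) \<and>
     (\<forall>j\<in>{1..m}. 0 \<le> y j \<and> y j \<le> 1 \<and> 0 \<le> l j)"

definition lp_objective ::
  "nat \<Rightarrow> (nat \<Rightarrow> real) \<Rightarrow> (nat \<Rightarrow> real) \<Rightarrow> (nat \<Rightarrow> real) \<Rightarrow> (nat \<Rightarrow> real) \<Rightarrow> real" where
  "lp_objective m f c y l = (\<Sum>j=1..m. f j * y j + c j * l j)"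

definition lp_opt ::
  "nat \<Rightarrow> nat \<Rightarrow> (nat \<Rightarrow> nat) \<Rightarrow> (nat \<Rightarrow> nat) \<Rightarrow> (nat \<Rightarrow> real) \<Rightarrow> (nat \<Rightarrow> real) \<Rightarrow> real" where
  "lp_opt n m w C f c =
     Inf {lp_objective m f c y l | x y l. lp_feasible n m w C x y l}"

end

theory Submission
  imports Defs
begin

lemma obj_bound:
  fixes n m :: nat and w C :: "nat \<Rightarrow> nat" and f c r :: "nat \<Rightarrow> real"
    and a :: "nat \<Rightarrow> nat" and k W :: nat
  assumes W_def: "W = (\<Sum>i=1..n. w i)"
    and C_pos: "\<forall>j\<in>{1..m}. 0 < C j"
    and f_nonneg: "\<forall>j\<in>{1..m}. 0 \<le> f j"
    and c_nonneg: "\<forall>j\<in>{1..m}. 0 \<le> c j"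
    and cap: "(\<Sum>j=1..m. C j) \<ge> W"
    and r_def: "\<forall>j. r j = f j / real (C j) + c j"
    and a_perm: "bij_betw a {1..m} {1..m}"
    and a_sorted: "\<forall>j1 j2. 1 \<le> j1 \<and> j1 \<le> j2 \<and> j2 \<le> m \<longrightarrow> r (a j1) \<le> r (a j2)"
    and k_def: "k = (LEAST k. (\<Sum>j=1..k. C (a j)) \<ge> W)"
    and feas: "lp_feasible n m w C x y l"
  shows "lp_objective m f c y l \<ge>
           (\<Sum>j=1..k-1. real (C (a j)) * r (a j))
           + (real W - real (\<Sum>j=1..k-1. C (a j))) * r (a k)"
proof -
  have x1: "\<forall>i\<in>{1..n}. (\<Sum>j=1..m. x i j) = 1"
    and ldef: "\<forall>j\<in>{1..m}. (\<Sum>i=1..n. real (w i) * x i j) = l j"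
    and lC: "\<forall>j\<in>{1..m}. l j \<le> real (C j) * y j"
    and yl: "\<forall>j\<in>{1..m}. 0 \<le> y j \<and> y j \<le> 1 \<and> 0 \<le> l j"
    using feas unfolding lp_feasible_def by auto
  have sumL: "(\<Sum>j=1..m. l j) = real W"
  proof -
    have "(\<Sum>j=1..m. l j) = (\<Sum>j=1..m. \<Sum>i=1..n. real (w i) * x i j)"
      using ldef by simp
    also have "\<dots> = (\<Sum>i=1..n. \<Sum>j=1..m. real (w i) * x i j)"
      by (rule sum.swap)
    also have "\<dots> = (\<Sum>i=1..n. real (w i) * (\<Sum>j=1..m. x i j))"
      by (simp add: sum_distrib_left)
    also have "\<dots> = (\<Sum>i=1..n. real (w i))" using x1 by simp
    finally show ?thesis using W_def by simp
  qed
  have step2: "\<forall>j\<in>{1..m}. f j * y j + c j * l j \<ge> r j * l j"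
  proof
    fix j assume j: "j \<in> {1..m}"
    have Cp: "real (C j) > 0" using C_pos j by simp
    have "l j / real (C j) \<le> y j" using lC j Cp by (simp add: divide_simps mult.commute)
    hence "f j * (l j / real (C j)) \<le> f j * y j"
      using f_nonneg j by (intro mult_left_mono) auto
    thus "f j * y j + c j * l j \<ge> r j * l j" using r_def
      by (simp add: algebra_simps)
  qed
  have obj: "lp_objective m f c y l \<ge> (\<Sum>j=1..m. r j * l j)"
    unfolding lp_objective_def using step2 by (intro sum_mono) auto
  have reidx: "(\<Sum>j=1..m. r j * l j) = (\<Sum>t=1..m. r (a t) * l (a t))"
    using sum.reindex_bij_betw[OF a_perm, of "\<lambda>j. r j * l j"] by simp
  have reidxL: "(\<Sum>t=1..m. l (a t)) = real W"
    using sum.reindex_bij_betw[OF a_perm, of l] sumL by simp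
  have rnn: "\<forall>j\<in>{1..m}. r j \<ge> 0" using r_def f_nonneg c_nonneg by simp
  show ?thesis
  proof (cases "W = 0")
    case True
    hence k0: "k = 0" using k_def by (simp add: Least_eq_0)
    have "(\<Sum>j=1..m. r j * l j) \<ge> 0" using rnn yl by (intro sum_nonneg) auto
    thus ?thesis using obj k0 True by simp
  next
    case False
    have capa: "(\<Sum>j=1..m. C (a j)) \<ge> W"
      using sum.reindex_bij_betw[OF a_perm, of C] cap by simp
    have km: "k \<le> m" using k_def capa by (simp add: Least_le)
    have k1: "k \<ge> 1"
    proof (rule ccontr)
      assume "\<not> k \<ge> 1" hence "k = 0" by simp
      moreover have "(\<Sum>j=1..k. C (a j)) \<ge> W" unfolding k_def
        by (rule LeastI[of _ m]) (rule capa)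
      ultimately show False using False by simp
    qed
    define \<rho> where "\<rho> = r (a k)"
    define g where "g t = (if t < k then real (C (a t)) else 0)" for t
    have aim: "\<forall>t\<in>{1..m}. a t \<in> {1..m}" using a_perm by (auto simp: bij_betw_def)
    have termw: "\<forall>t\<in>{1..m}. (r (a t) - \<rho>) * (l (a t) - g t) \<ge> 0"
    proof
      fix t assume t: "t \<in> {1..m}"
      show "(r (a t) - \<rho>) * (l (a t) - g t) \<ge> 0"
      proof (cases "t < k")
        case True
        have "r (a t) \<le> \<rho>" unfolding \<rho>_def using a_sorted t True km by auto
        moreover have "l (a t) \<le> real (C (a t))"
        proof -
          have "l (a t) \<le> real (C (a t)) * y (a t)" using lC aim t by auto
          also have "\<dots> \<le> real (C (a t))" using yl aim t
            by (simp add: mult_left_le)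
          finally show ?thesis .
        qed
        ultimately show ?thesis using True g_def
          by (simp add: mult_nonpos_nonpos)
      next
        case False
        have "r (a t) \<ge> \<rho>" unfolding \<rho>_def using a_sorted t False k1 by auto
        moreover have "l (a t) \<ge> 0" using yl aim t by auto
        ultimately show ?thesis using False g_def by simp
      qed
    qed
    from termw have "(\<Sum>t=1..m. (r (a t) - \<rho>) * (l (a t) - g t)) \<ge> 0"
      by (intro sum_nonneg) auto
    moreover have "(\<Sum>t=1..m. (r (a t) - \<rho>) * (l (a t) - g t)) =
        (\<Sum>t=1..m. r (a t) * l (a t)) - \<rho> * (\<Sum>t=1..m. l (a t))
        - (\<Sum>t=1..m. r (a t) * g t) + \<rho> * (\<Sum>t=1..m. g t)"
      by (simp add: algebra_simps sum_subtractf sum.distrib sum_distrib_left)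
    moreover have setEq: "{t\<in>{1..m}. t < k} = {1..k-1}" using km k1 by auto
    have "(\<Sum>t=1..m. g t) = (\<Sum>t=1..k-1. real (C (a t)))"
      unfolding g_def using sum.inter_filter[of "{1..m}" "\<lambda>t. real (C (a t))" "\<lambda>t. t<k"] setEq
      by simp
    moreover have "(\<Sum>t=1..m. r (a t) * g t) = (\<Sum>t=1..k-1. real (C (a t)) * r (a t))"
    proof -
      have "(\<Sum>t=1..m. r (a t) * g t) = (\<Sum>t=1..m. if t < k then real (C (a t)) * r (a t) else 0)"
        unfolding g_def by (intro sum.cong) auto
      also have "\<dots> = (\<Sum>t=1..k-1. real (C (a t)) * r (a t))"
        using sum.inter_filter[of "{1..m}" "\<lambda>t. real (C (a t)) * r (a t)" "\<lambda>t. t<k"] setEq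
        by simp
      finally show ?thesis .
    qed
    ultimately show ?thesis using obj reidx reidxL \<rho>_def by (simp add: algebra_simps)
  qed
qed

theorem proposition1:
  fixes n m :: nat and w C :: "nat \<Rightarrow> nat" and f c r :: "nat \<Rightarrow> real"
    and a :: "nat \<Rightarrow> nat" and k W :: nat
  assumes w_pos: "\<forall>i\<in>{1..n}. 0 < w i"
    and w_sorted: "\<forall>i1 i2. 1 \<le> i1 \<and> i1 \<le> i2 \<and> i2 \<le> n \<longrightarrow> w i1 \<le> w i2"
    and W_def: "W = (\<Sum>i=1..n. w i)"
    and C_pos: "\<forall>j\<in>{1..m}. 0 < C j"
    and f_nonneg: "\<forall>j\<in>{1..m}. 0 \<le> f j"
    and c_nonneg: "\<forall>j\<in>{1..m}. 0 \<le> c j"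
    and cap: "(\<Sum>j=1..m. C j) \<ge> W"
    and r_def: "\<forall>j. r j = f j / real (C j) + c j"
    and a_perm: "bij_betw a {1..m} {1..m}"
    and a_sorted: "\<forall>j1 j2. 1 \<le> j1 \<and> j1 \<le> j2 \<and> j2 \<le> m \<longrightarrow> r (a j1) \<le> r (a j2)"
    and k_def: "k = (LEAST k. (\<Sum>j=1..k. C (a j)) \<ge> W)"
  shows "lp_opt n m w C f c \<ge>
           (\<Sum>j=1..k-1. real (C (a j)) * r (a j))
           + (real W - real (\<Sum>j=1..k-1. C (a j))) * r (a k)"
proof -
  define S where "S = real (\<Sum>j=1..m. C j)"
  define x0 where "x0 i j = real (C j) / S" for i j :: nat
  define l0 where "l0 j = (\<Sum>i=1..n. real (w i) * x0 i j)" for j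
  define y0 where "y0 (j::nat) = (1::real)" for j
  have Snn: "S \<ge> 0" unfolding S_def by (simp only: of_nat_0_le_iff)
  have WS: "real W \<le> S" unfolding S_def using cap by (simp only: of_nat_le_iff)
  have feas0: "lp_feasible n m w C x0 y0 l0"
    unfolding lp_feasible_def
  proof (intro conjI ballI)
    fix i assume i: "i \<in> {1..n}"
    have "w i \<le> W" unfolding W_def using i by (intro member_le_sum) auto
    hence "W > 0" using w_pos i by fastforce
    hence Sp: "S > 0" using WS by linarith
    have "(\<Sum>j=1..m. x0 i j) = (\<Sum>j=1..m. real (C j)) / S"
      unfolding x0_def by (simp add: sum_divide_distrib)
    also have "\<dots> = 1" using Sp unfolding S_def by simp
    finally show "(\<Sum>j=1..m. x0 i j) = 1" .
  next
    fix j assume "j \<in> {1..m}"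
    show "(\<Sum>i=1..n. real (w i) * x0 i j) = l0 j" unfolding l0_def ..
  next
    fix j assume j: "j \<in> {1..m}"
    have "l0 j = real W * real (C j) / S"
      unfolding l0_def x0_def W_def by (simp add: sum_distrib_right sum_divide_distrib)
    also have "\<dots> \<le> real (C j)"
    proof (cases "S = 0")
      case True thus ?thesis by simp
    next
      case False
      hence "S > 0" using Snn by simp
      thus ?thesis using WS by (simp add: divide_simps mult_right_mono mult.commute)
    qed
    finally show "l0 j \<le> real (C j) * y0 j" unfolding y0_def by simp
  next
    fix i j assume "i \<in> {1..n}" "j \<in> {1..m}"
    show "0 \<le> x0 i j" unfolding x0_def using Snn by simp
  next
    fix i j assume i: "i \<in> {1..n}" and j: "j \<in> {1..m}"
    have "real (C j) \<le> S" unfolding S_def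
      using j by (simp add: member_le_sum del: of_nat_sum flip: of_nat_sum)
    thus "x0 i j \<le> 1" unfolding x0_def using Snn
      by (cases "S = 0") (auto simp: divide_simps)
  next
    fix j assume "j \<in> {1..m}"
    show "0 \<le> y0 j" "y0 j \<le> 1" unfolding y0_def by auto
    show "0 \<le> l0 j" unfolding l0_def x0_def using Snn
      by (intro sum_nonneg) simp
  qed
  show ?thesis unfolding lp_opt_def
  proof (rule cInf_greatest)
    show "{lp_objective m f c y l |x y l. lp_feasible n m w C x y l} \<noteq> {}"
      using feas0 by blast
  next
    fix z assume "z \<in> {lp_objective m f c y l |x y l. lp_feasible n m w C x y l}"
    then obtain x y l where z: "z = lp_objective m f c y l" and fe: "lp_feasible n m w C x y l"
      by blast
    show "(\<Sum>j=1..k-1. real (C (a j)) * r (a j))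
           + (real W - real (\<Sum>j=1..k-1. C (a j))) * r (a k) \<le> z"
      unfolding z by (rule obj_bound[OF W_def C_pos f_nonneg c_nonneg cap r_def a_perm a_sorted k_def fe])
  qed
qed

end
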